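(* Let $G$ be a connected simple graph with at least $2$ vertices and let $v\in V(G)$. Then $$\chi_{dom}(G)-\deg v+1\leq \chi_{dom}(G\odot v)\leq \chi_{dom}(G)+1.$$
   Context: All graphs are finite and simple. A dominated coloring of a graph $H$ is a proper vertex coloring of $H$ such that for every color class $C$ there is a vertex $x\in V(H)$ adjacent to every vertex of $C$. The dominated chromatic number $\chi_{dom}(H)$ is the minimum number of colors in a dominated coloring of $H$. $G\odot v$ denotes the graph obtained from $G$ by removing every edge joining two neighbours of $v$ ($v$ itself and all other edges are kept). $\deg v$ is the degree of $v$ in $G$. *)

theory Defs
  imports Main
begin

definition simple_graph :: "'a set \<Rightarrow> ('a \<Rightarrow> 'a \<Rightarrow> bool) \<Rightarrow> bool" where
  "simple_graph V E \<longleftrightarrow> finite V \<and> (\<forall>x y. E x y \<longrightarrow> x \<in> V \<and> y \<in> V)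
     \<and> (\<forall>x y. E x y \<longrightarrow> E y x) \<and> (\<forall>x. \<not> E x x)"

definition connected_graph :: "'a set \<Rightarrow> ('a \<Rightarrow> 'a \<Rightarrow> bool) \<Rightarrow> bool" where
  "connected_graph V E \<longleftrightarrow> (\<forall>x\<in>V. \<forall>y\<in>V. E\<^sup>*\<^sup>* x y)"

definition degree :: "'a set \<Rightarrow> ('a \<Rightarrow> 'a \<Rightarrow> bool) \<Rightarrow> 'a \<Rightarrow> nat" where
  "degree V E v = card {u\<in>V. E v u}"

definition dominated_coloring :: "'a set \<Rightarrow> ('a \<Rightarrow> 'a \<Rightarrow> bool) \<Rightarrow> ('a \<Rightarrow> nat) \<Rightarrow> bool" where
  "dominated_coloring V E c \<longleftrightarrow>
     (\<forall>x\<in>V. \<forall>y\<in>V. E x y \<longrightarrow> c x \<noteq> c y) \<and>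
     (\<forall>i\<in>c ` V. \<exists>x\<in>V. \<forall>y\<in>V. c y = i \<longrightarrow> E x y)"

definition chi_dom :: "'a set \<Rightarrow> ('a \<Rightarrow> 'a \<Rightarrow> bool) \<Rightarrow> nat" where
  "chi_dom V E = (LEAST k. \<exists>c. dominated_coloring V E c \<and> card (c ` V) = k)"

definition odot :: "('a \<Rightarrow> 'a \<Rightarrow> bool) \<Rightarrow> 'a \<Rightarrow> ('a \<Rightarrow> 'a \<Rightarrow> bool)" where
  "odot E v = (\<lambda>x y. E x y \<and> \<not> (E v x \<and> E v y))"

end

theory Submission
  imports Defs
begin

lemma chi_dom_le: "dominated_coloring V E c \<Longrightarrow> chi_dom V E \<le> card (c ` V)"
  unfolding chi_dom_def by (rule Least_le) blast

lemma chi_dom_ex: "\<exists>c. dominated_coloring V E c \<Longrightarrow>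
   \<exists>c. dominated_coloring V E c \<and> card (c ` V) = chi_dom V E"
  unfolding chi_dom_def by (rule LeastI_ex) blast

lemma has_nb:
  assumes "simple_graph V E" "connected_graph V E" "card V \<ge> 2" "y \<in> V"
  shows "\<exists>x. E y x"
proof -
  have fin: "finite V" using assms(1) by (simp add: simple_graph_def)
  have "V - {y} \<noteq> {}"
  proof
    assume "V - {y} = {}"
    then have "V \<subseteq> {y}" by blast
    then have "card V \<le> 1" using card_mono[of "{y}" V] by (metis card.empty card.insert card_mono
          empty_iff finite.intros One_nat_def)
    then show False using assms(3) by simp
  qed
  then obtain z where z: "z \<in> V" "z \<noteq> y" by blast
  have "E\<^sup>*\<^sup>* y z" using assms(2,4) z(1) by (simp add: connected_graph_def)
  then show ?thesis using z(2) by (cases rule: converse_rtranclpE) auto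
qed

lemma inj_coloring:
  assumes "simple_graph V E'" "\<And>y. y \<in> V \<Longrightarrow> \<exists>x\<in>V. E' x y" "inj_on g V"
  shows "dominated_coloring V E' g"
  unfolding dominated_coloring_def
proof (intro conjI ballI impI)
  fix x y assume "x \<in> V" "y \<in> V" "E' x y"
  then have "x \<noteq> y" using assms(1) by (auto simp: simple_graph_def)
  then show "g x \<noteq> g y" using assms(3) \<open>x \<in> V\<close> \<open>y \<in> V\<close> by (meson inj_on_def)
next
  fix i assume "i \<in> g ` V"
  then obtain y where y: "y \<in> V" "i = g y" by blast
  then obtain x where "x \<in> V" "E' x y" using assms(2) by blast
  then show "\<exists>x\<in>V. \<forall>y\<in>V. g y = i \<longrightarrow> E' x y"
    using y assms(3) by (metis inj_on_def)
qed

lemma upper_col: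
  assumes sg: "simple_graph V E" and dc: "dominated_coloring V E c"
  shows "\<exists>c'. dominated_coloring V (odot E v) c' \<and> card (c' ` V) \<le> card (c ` V) + 1"
proof -
  have fin: "finite V" using sg by (simp add: simple_graph_def)
  define M where "M = Suc (Max (c ` V))"
  have lt: "y \<in> V \<Longrightarrow> c y < M" for y using fin M_def by (simp add: le_imp_less_Suc)
  define c' where "c' y = (if E v y then M else c y)" for y
  have irr: "\<not> E x x" for x using sg by (simp add: simple_graph_def)
  have "dominated_coloring V (odot E v) c'"
    unfolding dominated_coloring_def
  proof (intro conjI ballI impI)
    fix x y assume xy: "x \<in> V" "y \<in> V" "odot E v x y"
    then have e: "E x y" "\<not> (E v x \<and> E v y)" by (auto simp: odot_def)
    show "c' x \<noteq> c' y"
    proof (cases "E v x \<or> E v y")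
      case True then show ?thesis using e lt xy by (auto simp: c'_def)
    next
      case False then show ?thesis using dc e xy
        by (auto simp: c'_def dominated_coloring_def)
    qed
  next
    fix i assume "i \<in> c' ` V"
    then obtain y0 where y0: "y0 \<in> V" "i = c' y0" by blast
    show "\<exists>x\<in>V. \<forall>y\<in>V. c' y = i \<longrightarrow> odot E v x y"
    proof (cases "E v y0")
      case True
      have "v \<in> V" using True sg by (auto simp: simple_graph_def)
      moreover have "\<forall>y\<in>V. c' y = i \<longrightarrow> odot E v v y"
        using True y0 lt irr by (auto simp: c'_def odot_def split: if_splits)
      ultimately show ?thesis by blast
    next
      case False
      then have i: "i = c y0" using y0 by (simp add: c'_def)
      then obtain x where x: "x \<in> V" "\<forall>y\<in>V. c y = i \<longrightarrow> E x y"
        using dc y0 by (auto simp: dominated_coloring_def)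
      have "\<forall>y\<in>V. c' y = i \<longrightarrow> odot E v x y"
        using x lt y0 False i by (auto simp: c'_def odot_def split: if_splits)
      then show ?thesis using x by blast
    qed
  qed
  moreover have "card (c' ` V) \<le> card (c ` V) + 1"
  proof -
    have "c' ` V \<subseteq> insert M (c ` V)" by (auto simp: c'_def)
    then have "card (c' ` V) \<le> card (insert M (c ` V))" by (simp add: card_mono fin)
    also have "\<dots> \<le> card (c ` V) + 1" by (simp add: card_insert_le_m1 fin card_insert_if)
    finally show ?thesis .
  qed
  ultimately show ?thesis by blast
qed

lemma lower_col:
  assumes sg: "simple_graph V E" and dc: "dominated_coloring V (odot E v) c"
    and u: "u \<in> V" "E v u"
  shows "\<exists>c'. dominated_coloring V E c' \<and> card (c' ` V) + 1 \<le> card (c ` V) + degree V E v"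
proof -
  have fin: "finite V" using sg by (simp add: simple_graph_def)
  define S where "S = {w\<in>V. E v w \<and> w \<noteq> u}"
  have finS: "finite S" using fin S_def by simp
  obtain g :: "'a \<Rightarrow> nat" and n where g: "g ` S = {i. i < n}" "inj_on g S"
    using finite_imp_inj_to_nat_seg[OF finS] by blast
  define M where "M = Suc (Max (c ` V))"
  have lt: "y \<in> V \<Longrightarrow> c y < M" for y using fin M_def by (simp add: le_imp_less_Suc)
  define c' where "c' y = (if y \<in> S then M + g y else c y)" for y
  have irr: "\<not> E x x" for x using sg by (simp add: simple_graph_def)
  have "dominated_coloring V E c'"
    unfolding dominated_coloring_def
  proof (intro conjI ballI impI)
    fix x y assume xy: "x \<in> V" "y \<in> V" "E x y"
    have "x \<noteq> y" using xy irr by auto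
    show "c' x \<noteq> c' y"
    proof (cases "x \<in> S \<or> y \<in> S")
      case True
      show ?thesis
      proof (cases "x \<in> S \<and> y \<in> S")
        case True
        then have "g x \<noteq> g y" using g(2) \<open>x \<noteq> y\<close> by (meson inj_on_def)
        then show ?thesis using True by (simp add: c'_def)
      next
        case False
        then show ?thesis using \<open>x \<in> S \<or> y \<in> S\<close> lt[OF xy(1)] lt[OF xy(2)]
          by (auto simp: c'_def)
      qed
    next
      case False
      then have "\<not> (E v x \<and> E v y)" using xy \<open>x \<noteq> y\<close> by (auto simp: S_def)
      then have "odot E v x y" using xy by (simp add: odot_def)
      then show ?thesis using False dc xy by (auto simp: c'_def dominated_coloring_def)
    qed
  next
    fix i assume "i \<in> c' ` V"
    then obtain y0 where y0: "y0 \<in> V" "i = c' y0" by blast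
    show "\<exists>x\<in>V. \<forall>y\<in>V. c' y = i \<longrightarrow> E x y"
    proof (cases "y0 \<in> S")
      case True
      have "v \<in> V" using u sg by (auto simp: simple_graph_def)
      moreover have "\<forall>y\<in>V. c' y = i \<longrightarrow> E v y"
      proof (intro ballI impI)
        fix y assume "y \<in> V" "c' y = i"
        then have "y \<in> S" using lt[of y] True y0 by (auto simp: c'_def split: if_splits)
        then show "E v y" by (simp add: S_def)
      qed
      ultimately show ?thesis by blast
    next
      case False
      then have i: "i = c y0" using y0 by (simp add: c'_def)
      then obtain x where x: "x \<in> V" "\<forall>y\<in>V. c y = i \<longrightarrow> odot E v x y"
        using dc y0 by (auto simp: dominated_coloring_def)
      have "\<forall>y\<in>V. c' y = i \<longrightarrow> E x y"
      proof (intro ballI impI)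
        fix y assume yy: "y \<in> V" "c' y = i"
        have "y \<notin> S"
        proof
          assume "y \<in> S"
          then have "c' y \<ge> M" by (simp add: c'_def)
          then show False using yy lt[OF y0(1)] i by simp
        qed
        then show "E x y" using x yy i by (auto simp: c'_def odot_def)
      qed
      then show ?thesis using x by blast
    qed
  qed
  moreover have "card (c' ` V) + 1 \<le> card (c ` V) + degree V E v"
  proof -
    have "c' ` V \<subseteq> c ` V \<union> (\<lambda>y. M + g y) ` S" by (auto simp: c'_def S_def)
    then have "card (c' ` V) \<le> card (c ` V \<union> (\<lambda>y. M + g y) ` S)" by (simp add: card_mono fin finS)
    also have "\<dots> \<le> card (c ` V) + card ((\<lambda>y. M + g y) ` S)" by (rule card_Un_le)
    also have "\<dots> \<le> card (c ` V) + card S" using card_image_le[OF finS] by simp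
    finally have a: "card (c' ` V) \<le> card (c ` V) + card S" .
    have "{w\<in>V. E v w} = insert u S" using u by (auto simp: S_def)
    moreover have "u \<notin> S" by (simp add: S_def)
    ultimately have "degree V E v = Suc (card S)" using finS by (simp add: degree_def)
    then show ?thesis using a by simp
  qed
  ultimately show ?thesis by blast
qed

theorem theorem3p6:
  fixes V :: "'a set" and E :: "'a \<Rightarrow> 'a \<Rightarrow> bool" and v :: 'a
  assumes "simple_graph V E" and "connected_graph V E" and "card V \<ge> 2" and "v \<in> V"
  shows "int (chi_dom V E) - int (degree V E v) + 1 \<le> int (chi_dom V (odot E v)) \<and>
         chi_dom V (odot E v) \<le> chi_dom V E + 1"
proof -
  have fin: "finite V" using assms(1) by (simp add: simple_graph_def)
  obtain g :: "'a \<Rightarrow> nat" where g: "inj_on g V"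
    using finite_imp_inj_to_nat_seg[OF fin] by blast
  have nb: "\<And>y. y \<in> V \<Longrightarrow> \<exists>x. E y x" using has_nb[OF assms(1-3)] by blast
  have sym: "E x y \<Longrightarrow> E y x" for x y using assms(1) by (simp add: simple_graph_def)
  have inV: "E x y \<Longrightarrow> x \<in> V \<and> y \<in> V" for x y using assms(1) by (simp add: simple_graph_def)
  have irr: "\<not> E x x" for x using assms(1) by (simp add: simple_graph_def)
  have sgo: "simple_graph V (odot E v)" using assms(1)
    by (auto simp: simple_graph_def odot_def)
  obtain u where u: "E v u" using nb assms(4) by blast
  have "dominated_coloring V E g"
    by (rule inj_coloring[OF assms(1) _ g]) (metis nb sym inV)
  then obtain c where c: "dominated_coloring V E c" "card (c ` V) = chi_dom V E"
    using chi_dom_ex by blast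
  have "dominated_coloring V (odot E v) g"
  proof (rule inj_coloring[OF sgo _ g])
    fix y assume y: "y \<in> V"
    show "\<exists>x\<in>V. odot E v x y"
    proof (cases "y = v")
      case True then show ?thesis using u inV[of v u] sym[of v u] irr[of v] by (auto simp: odot_def)
    next
      case False
      show ?thesis
      proof (cases "E v y")
        case True then show ?thesis using irr assms(4) by (auto simp: odot_def)
      next
        case F: False
        obtain x where "E y x" using nb y by blast
        then have "E x y" "x \<in> V" using sym inV by blast+
        then show ?thesis using F by (auto simp: odot_def)
      qed
    qed
  qed
  then obtain d where d: "dominated_coloring V (odot E v) d" "card (d ` V) = chi_dom V (odot E v)"
    using chi_dom_ex by blast
  obtain c' where c': "dominated_coloring V (odot E v) c'" "card (c' ` V) \<le> card (c ` V) + 1"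
    using upper_col[OF assms(1) c(1)] by blast
  have up: "chi_dom V (odot E v) \<le> chi_dom V E + 1"
    using chi_dom_le[OF c'(1)] c'(2) c(2) by simp
  obtain d' where d': "dominated_coloring V E d'" "card (d' ` V) + 1 \<le> card (d ` V) + degree V E v"
    using lower_col[OF assms(1) d(1) _ u] inV u by blast
  have "chi_dom V E + 1 \<le> chi_dom V (odot E v) + degree V E v"
    using chi_dom_le[OF d'(1)] d'(2) d(2) by simp
  then show ?thesis using up by simp
qed

end
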